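(* Let $\gamma\ge0$ and $g$ be integers with $g$ sufficiently large relative to $\gamma$, and fix a set ${\rm S}_0$ arising as the residue-zero part of some semigroup in ${\rm H}(g,\gamma)$. Let $u_1, u_1'$ be integers, let ${\rm S}\in{\rm H}_{u_1}$ be such that $\#{\rm S}_{(u_1)_3}$ is maximal among all members of ${\rm H}_{u_1}$, and let ${\rm T}\in{\rm H}_{u_1'}$ be such that $\#{\rm T}_{(u_1')_3}$ is maximal among all members of ${\rm H}_{u_1'}$. If $\chi := u_1 - u_1^H < 6\gamma$ and ${\rm S}_{(u_1)_3} \subsetneq {\rm T}_{(u_1')_3}$, then $\widetilde{I}_{\rm T} < \widetilde{I}_{\rm S}$.
   Context: A numerical semigroup is a submonoid of $\mathbb{N}$ with finite complement; its genus is the size of the complement. For an integer $u$, $(u)_3$ is its residue mod 3 in $\{0,1,2\}$. For a semigroup ${\rm S}$ of genus $g$, ${\rm S}^*={\rm S}\cap\{1,\dots,2g\}$, ${\rm S}_i=\{s\in{\rm S}^*:(s)_3=i\}$, and the inflection is $\widetilde{I}_{\rm S}=\sum_{s\in{\rm S}^*}s$. A numerical semigroup is $(3,\gamma)$-hyperelliptic if its first $\gamma$ positive elements are multiples of 3 with the $\gamma$-th equal to $6\gamma$, and $3(2\gamma+1)$ belongs to it. ${\rm H}={\rm H}(g,\gamma)$ is the set of $(3,\gamma)$-hyperelliptic semigroups of genus $g$; $u_1({\rm T}) := \min\{t\in{\rm T}:(t)_3\ne0\}$; $u_1^H:=\min\{u_1({\rm T}):{\rm T}\in{\rm H}\}$.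 For the fixed set ${\rm S}_0$, ${\rm H}^{{\rm S}_0} := \{{\rm T}\in{\rm H} : {\rm T}_0={\rm S}_0\}$ and, for an integer $u$, ${\rm H}_{u} := \{{\rm T}\in{\rm H}^{{\rm S}_0} : u_1({\rm T}) = u\}$. *)

theory Defs
  imports Main
begin

definition numerical_semigroup :: "nat set \<Rightarrow> bool" where
  "numerical_semigroup S \<longleftrightarrow> 0 \<in> S \<and> (\<forall>a\<in>S. \<forall>b\<in>S. a + b \<in> S) \<and> finite (UNIV - S)"

definition genus :: "nat set \<Rightarrow> nat" where
  "genus S = card (UNIV - S)"

text \<open>(3,gamma)-hyperelliptic: the first gamma positive elements are multiples of 3,
  the gamma-th one equals 6 gamma, and 3(2 gamma + 1) belongs to S.  "The gamma-th positive
  element is 6 gamma" is expressed as: 6 gamma is in S and exactly gamma positive elements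
  of S are at most 6 gamma.\<close>
definition hyperelliptic3 :: "nat \<Rightarrow> nat set \<Rightarrow> bool" where
  "hyperelliptic3 \<gamma> S \<longleftrightarrow> numerical_semigroup S
     \<and> 6 * \<gamma> \<in> S
     \<and> card {s\<in>S. 0 < s \<and> s \<le> 6 * \<gamma>} = \<gamma>
     \<and> (\<forall>s\<in>S. 0 < s \<and> s \<le> 6 * \<gamma> \<longrightarrow> 3 dvd s)
     \<and> 3 * (2 * \<gamma> + 1) \<in> S"

definition HH :: "nat \<Rightarrow> nat \<Rightarrow> nat set set" where
  "HH g \<gamma> = {S. hyperelliptic3 \<gamma> S \<and> genus S = g}"

definition Sstar :: "nat set \<Rightarrow> nat set" where
  "Sstar S = {s\<in>S. 1 \<le> s \<and> s \<le> 2 * genus S}"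

definition Spart :: "nat set \<Rightarrow> nat \<Rightarrow> nat set" where
  "Spart S i = {s\<in>Sstar S. s mod 3 = i}"

definition inflection :: "nat set \<Rightarrow> nat" where
  "inflection S = (\<Sum>s\<in>Sstar S. s)"

definition u1 :: "nat set \<Rightarrow> nat" where
  "u1 T = (LEAST t. t \<in> T \<and> t mod 3 \<noteq> 0)"

definition u1H :: "nat \<Rightarrow> nat \<Rightarrow> nat" where
  "u1H g \<gamma> = Min (u1 ` HH g \<gamma>)"

definition HS0 :: "nat \<Rightarrow> nat \<Rightarrow> nat set \<Rightarrow> nat set set" where
  "HS0 g \<gamma> S0 = {T\<in>HH g \<gamma>. Spart T 0 = S0}"

definition Hu :: "nat \<Rightarrow> nat \<Rightarrow> nat set \<Rightarrow> nat \<Rightarrow> nat set set" where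
  "Hu g \<gamma> S0 u = {T\<in>HS0 g \<gamma> S0. u1 T = u}"

end

theory Submission
  imports Defs
begin


lemma ns_add: "numerical_semigroup S \<Longrightarrow> a \<in> S \<Longrightarrow> b \<in> S \<Longrightarrow> a + b \<in> S"
  unfolding numerical_semigroup_def by blast

lemma ns_mult: "numerical_semigroup S \<Longrightarrow> a \<in> S \<Longrightarrow> k * a \<in> S"
proof (induction k)
  case 0 then show ?case unfolding numerical_semigroup_def by simp
next
  case (Suc k) then show ?case using ns_add[of S a "k*a"] by (simp add: add.commute)
qed

lemma h3_mult3:
  assumes h: "hyperelliptic3 \<gamma> S" and n: "4*\<gamma>^2 \<le> n"
  shows "3*n \<in> S"
proof -
  have ns: "numerical_semigroup S" and a: "6*\<gamma> \<in> S" and b: "3*(2*\<gamma>+1) \<in> S"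
    using h unfolding hyperelliptic3_def by auto
  show ?thesis
  proof (cases "\<gamma> = 0")
    case True
    then have "3 \<in> S" using b by simp
    from ns_mult[OF ns this, of n] show ?thesis by (simp add: mult.commute)
  next
    case False
    define q where "q = n div (2*\<gamma>)"
    define r where "r = n mod (2*\<gamma>)"
    have nq: "n = q*(2*\<gamma>) + r" unfolding q_def r_def by (rule div_mult_mod_eq[symmetric])
    have r: "r < 2*\<gamma>" unfolding r_def using False by simp
    have "(4*\<gamma>^2) div (2*\<gamma>) \<le> q" unfolding q_def using n by (rule div_le_mono)
    moreover have "(4*\<gamma>^2) div (2*\<gamma>) = 2*\<gamma>" using False by (simp add: power2_eq_square)
    ultimately have q: "2*\<gamma> \<le> q" by simp
    have e: "3*n = (q - r)*(6*\<gamma>) + r*(3*(2*\<gamma>+1))"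
    proof -
      have "(q - r)*(6*\<gamma>) + r*(3*(2*\<gamma>+1)) = (q-r)*(6*\<gamma>) + r*(6*\<gamma>) + 3*r" by (simp add: algebra_simps)
      also have "\<dots> = q*(6*\<gamma>) + 3*r" using q r by (simp add: add_mult_distrib[symmetric])
      also have "\<dots> = 3*n" using nq by simp
      finally show ?thesis by simp
    qed
    show ?thesis unfolding e using ns_add[OF ns ns_mult[OF ns a] ns_mult[OF ns b]] .
  qed
qed

lemma gap_lt:
  assumes ns: "numerical_semigroup S" and n: "n \<notin> S"
  shows "n < 2 * genus S"
proof -
  have fin: "finite (UNIV - S)" using ns unfolding numerical_semigroup_def by blast
  define A where "A = S \<inter> {..n}"
  define B where "B = (UNIV - S) \<inter> {..n}"
  have "inj_on (\<lambda>k. n - k) A" unfolding A_def by (auto simp: inj_on_def)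
  moreover have "(\<lambda>k. n - k) ` A \<subseteq> B"
  proof
    fix y assume "y \<in> (\<lambda>k. n - k) ` A"
    then obtain k where k: "k \<in> S" "k \<le> n" "y = n - k" unfolding A_def by auto
    have "y \<notin> S"
    proof
      assume "y \<in> S"
      then have "k + y \<in> S" using ns_add[OF ns k(1)] by blast
      then show False using k n by simp
    qed
    then show "y \<in> B" unfolding B_def using k by auto
  qed
  ultimately have "card A \<le> card B" by (metis card_inj_on_le finite_Int finite_atMost B_def)
  moreover have "card B \<le> genus S" unfolding B_def genus_def by (rule card_mono[OF fin]) auto
  moreover have "card A + card B = Suc n"
  proof -
    have "card A + card B = card (A \<union> B)" by (rule card_Un_disjoint[symmetric]) (auto simp: A_def B_def)
    also have "A \<union> B = {..n}" unfolding A_def B_def by auto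
    finally show ?thesis by simp
  qed
  ultimately show ?thesis by linarith
qed

lemma shift:
  assumes h: "hyperelliptic3 \<gamma> S" and a: "a \<in> S" and m: "n mod 3 = a mod 3" and le: "a + 12*\<gamma>^2 \<le> n"
  shows "n \<in> S"
proof -
  have ns: "numerical_semigroup S" using h unfolding hyperelliptic3_def by auto
  have "3 dvd (n - a)" using m le by (simp add: mod_eq_dvd_iff_nat)
  then obtain t where t: "n - a = 3*t" by blast
  have "4*\<gamma>^2 \<le> t" using t le by linarith
  then have "3*t \<in> S" by (rule h3_mult3[OF h])
  from ns_add[OF ns a this] have "a + (n - a) \<in> S" using t by simp
  then show ?thesis using le by simp
qed

lemma count_le: "card {n::nat. n < L \<and> n mod 3 = r} \<le> L div 3 + 1"
proof -
  have "inj_on (\<lambda>n. n div 3) {n::nat. n < L \<and> n mod 3 = r}"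
    by (auto simp: inj_on_def) (metis div_mult_mod_eq)
  moreover have "(\<lambda>n. n div 3) ` {n::nat. n < L \<and> n mod 3 = r} \<subseteq> {..L div 3}"
    by (auto intro: div_le_mono)
  ultimately have "card {n::nat. n < L \<and> n mod 3 = r} \<le> card {..L div 3}"
    by (rule card_inj_on_le) auto
  then show ?thesis by simp
qed

lemma count_ge:
  assumes "r < 3" "m mod 3 = (r::nat)"
  shows "m div 3 \<le> card {n. n < m \<and> n mod 3 = r}"
proof -
  have "inj_on (\<lambda>t. 3*t + r) {..<m div 3}" by (auto simp: inj_on_def)
  moreover have "(\<lambda>t. 3*t + r) ` {..<m div 3} \<subseteq> {n. n < m \<and> n mod 3 = r}"
  proof
    fix y assume "y \<in> (\<lambda>t. 3*t + r) ` {..<m div 3}"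
    then obtain t where "t < m div 3" "y = 3*t+r" by auto
    moreover have "m = 3*(m div 3) + r" using assms div_mult_mod_eq[of m 3] by simp
    ultimately show "y \<in> {n. n < m \<and> n mod 3 = r}" using assms by auto
  qed
  moreover have "finite {n. n < m \<and> n mod 3 = r}" by simp
  ultimately have "card {..<m div 3} \<le> card {n. n < m \<and> n mod 3 = r}"
    by (metis card_inj_on_le)
  then show ?thesis by simp
qed

lemma HH_finite: "finite (HH g \<gamma>)"
proof -
  have "HH g \<gamma> \<subseteq> (\<lambda>A. UNIV - A) ` Pow {..<2*g}"
  proof
    fix S assume S: "S \<in> HH g \<gamma>"
    then have ns: "numerical_semigroup S" and gS: "genus S = g" unfolding HH_def hyperelliptic3_def by auto
    have "UNIV - S \<subseteq> {..<2*g}" using gap_lt[OF ns] gS by auto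
    moreover have "S = UNIV - (UNIV - S)" by auto
    ultimately show "S \<in> (\<lambda>A. UNIV - A) ` Pow {..<2*g}" by blast
  qed
  then show ?thesis by (rule finite_subset) simp
qed



lemma construction:
  assumes g: "7*\<gamma> + 4 \<le> g"
  shows "u1H g \<gamma> + \<gamma> \<le> g + 3"
proof -
  define N where "N = g - \<gamma>"
  define x where "x = (N + 2) div 3"
  define y where "y = N - x"
  have x1: "N \<le> 3*x" and x2: "3*x \<le> N + 2" unfolding x_def by linarith+
  have N4: "6*\<gamma> + 4 \<le> N" unfolding N_def using g by linarith
  have yx: "x \<le> y" and y2x: "y \<le> 2*x" and xg: "2*\<gamma> \<le> x" and gN: "g = \<gamma> + x + y"
    unfolding y_def N_def using x1 x2 N4 g unfolding N_def by linarith+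
  define R where "R = {n::nat. n = 0 \<or> (n mod 3 = 0 \<and> 3*\<gamma>+3 \<le> n) \<or> (n mod 3 = 1 \<and> 3*x+1 \<le> n) \<or> (n mod 3 = 2 \<and> 3*y+2 \<le> n)}"
  have closed: "a + b \<in> R" if "a \<in> R" "b \<in> R" for a b
    using that yx y2x xg unfolding R_def by auto
  have compl: "UNIV - R = (\<lambda>t. 3*t) ` {1..\<gamma>} \<union> (\<lambda>t. 3*t+1) ` {..<x} \<union> (\<lambda>t. 3*t+2) ` {..<y}"
  proof
    show "UNIV - R \<subseteq> (\<lambda>t. 3*t) ` {1..\<gamma>} \<union> (\<lambda>t. 3*t+1) ` {..<x} \<union> (\<lambda>t. 3*t+2) ` {..<y}"
    proof
      fix n assume n: "n \<in> UNIV - R"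
      have nd: "n = 3*(n div 3) + n mod 3" by simp
      have "n mod 3 = 0 \<or> n mod 3 = 1 \<or> n mod 3 = 2" by linarith
      then show "n \<in> (\<lambda>t. 3*t) ` {1..\<gamma>} \<union> (\<lambda>t. 3*t+1) ` {..<x} \<union> (\<lambda>t. 3*t+2) ` {..<y}"
      proof (elim disjE)
        assume h: "n mod 3 = 0"
        then have "n div 3 \<in> {1..\<gamma>}" using n unfolding R_def by (auto; presburger)
        then show ?thesis using nd h by (metis UnI1 add_0_right image_eqI)
      next
        assume h: "n mod 3 = 1"
        then have "n div 3 \<in> {..<x}" using n unfolding R_def by (auto; presburger)
        then show ?thesis using nd h by (metis UnI1 UnI2 image_eqI)
      next
        assume h: "n mod 3 = 2"
        then have "n div 3 \<in> {..<y}" using n unfolding R_def by (auto; presburger)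
        then show ?thesis using nd h by (metis UnI2 image_eqI)
      qed
    qed
  next
    show "(\<lambda>t. 3*t) ` {1..\<gamma>} \<union> (\<lambda>t. 3*t+1) ` {..<x} \<union> (\<lambda>t. 3*t+2) ` {..<y} \<subseteq> UNIV - R"
      unfolding R_def by (auto; presburger)
  qed
  have cardc: "card (UNIV - R) = g"
  proof -
    have d1: "(\<lambda>t. 3*t) ` {1..\<gamma>} \<inter> (\<lambda>t. 3*t+1) ` {..<x} = {}" by auto presburger
    have d2: "((\<lambda>t. 3*t) ` {1..\<gamma>} \<union> (\<lambda>t. 3*t+1) ` {..<x}) \<inter> (\<lambda>t. 3*t+2) ` {..<y} = {}" by auto presburger+
    have i1: "card ((\<lambda>t. 3*t) ` {1..\<gamma>}) = \<gamma>" by (subst card_image) (auto simp: inj_on_def)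
    have i2: "card ((\<lambda>t. 3*t+1) ` {..<x}) = x" by (subst card_image) (auto simp: inj_on_def)
    have i3: "card ((\<lambda>t. 3*t+2) ` {..<y}) = y" by (subst card_image) (auto simp: inj_on_def)
    show ?thesis unfolding compl
      using card_Un_disjoint[OF _ _ d2] card_Un_disjoint[OF _ _ d1] i1 i2 i3 gN by simp
  qed
  have ns: "numerical_semigroup R"
  proof -
    have "finite (UNIV - R)" unfolding compl by simp
    moreover have "0 \<in> R" unfolding R_def by simp
    ultimately show ?thesis unfolding numerical_semigroup_def using closed by blast
  qed
  have low: "{s\<in>R. 0 < s \<and> s \<le> 6*\<gamma>} = (\<lambda>t. 3*t) ` {\<gamma>+1..2*\<gamma>}"
  proof
    show "{s\<in>R. 0 < s \<and> s \<le> 6*\<gamma>} \<subseteq> (\<lambda>t. 3*t) ` {\<gamma>+1..2*\<gamma>}"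
    proof
      fix s assume s: "s \<in> {s\<in>R. 0 < s \<and> s \<le> 6*\<gamma>}"
      then have h: "s mod 3 = 0" "3*\<gamma>+3 \<le> s" using xg yx unfolding R_def by auto
      then have "s div 3 \<in> {\<gamma>+1..2*\<gamma>}" "s = 3*(s div 3)" using s by auto
      then show "s \<in> (\<lambda>t. 3*t) ` {\<gamma>+1..2*\<gamma>}" by blast
    qed
  next
    show "(\<lambda>t. 3*t) ` {\<gamma>+1..2*\<gamma>} \<subseteq> {s\<in>R. 0 < s \<and> s \<le> 6*\<gamma>}" unfolding R_def by auto
  qed
  have h3: "hyperelliptic3 \<gamma> R"
    unfolding hyperelliptic3_def
  proof (intro conjI)
    show "6*\<gamma> \<in> R" unfolding R_def by auto
    show "card {s\<in>R. 0 < s \<and> s \<le> 6*\<gamma>} = \<gamma>" unfolding low by (subst card_image) (auto simp: inj_on_def)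
    show "\<forall>s\<in>R. 0 < s \<and> s \<le> 6 * \<gamma> \<longrightarrow> 3 dvd s"
    proof (intro ballI impI)
      fix s assume "s \<in> R" "0 < s \<and> s \<le> 6 * \<gamma>"
      then have "s \<in> (\<lambda>t. 3*t) ` {\<gamma>+1..2*\<gamma>}" using low by blast
      then show "3 dvd s" by auto
    qed
    show "3 * (2 * \<gamma> + 1) \<in> R" unfolding R_def by auto
  qed (rule ns)
  have RH: "R \<in> HH g \<gamma>" unfolding HH_def genus_def using h3 cardc by simp
  have u1R: "u1 R = 3*x+1"
    unfolding u1_def
  proof (rule Least_equality)
    show "3*x+1 \<in> R \<and> (3*x+1) mod 3 \<noteq> 0" unfolding R_def by auto
    show "3*x+1 \<le> t" if "t \<in> R \<and> t mod 3 \<noteq> 0" for t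
      using that yx unfolding R_def by auto
  qed
  have "u1H g \<gamma> \<le> u1 R" unfolding u1H_def using RH HH_finite by simp
  then show ?thesis using u1R x2 unfolding N_def using g by linarith
qed



lemma split3:
  assumes fin: "finite X" and i: "i = 1 \<or> i = (2::nat)"
  shows "sum f X = sum f (X \<inter> {n. n mod 3 = 0}) + sum f (X \<inter> {n. n mod 3 = i}) + sum f (X \<inter> {n. n mod 3 = 3 - i})"
proof -
  have a: "sum f X = sum f (X \<inter> {n. n mod 3 = 0}) + sum f (X - {n. n mod 3 = 0})" by (rule sum.Int_Diff[OF fin])
  have b: "sum f (X - {n. n mod 3 = 0}) = sum f ((X - {n. n mod 3 = 0}) \<inter> {n. n mod 3 = i}) + sum f ((X - {n. n mod 3 = 0}) - {n. n mod 3 = i})"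
    by (rule sum.Int_Diff) (use fin in simp)
  have c1: "(X - {n. n mod 3 = 0}) \<inter> {n. n mod 3 = i} = X \<inter> {n. n mod 3 = i}" using i by auto
  have c2: "(X - {n. n mod 3 = 0}) - {n. n mod 3 = i} = X \<inter> {n. n mod 3 = 3 - i}" using i by auto
  show ?thesis using a b c1 c2 by (simp add: add.assoc)
qed

lemma infl_gaps:
  assumes ns: "numerical_semigroup S"
  shows "inflection S + (\<Sum>s\<in>UNIV - S. s) = (\<Sum>s\<in>{1..2 * genus S}. s)"
proof -
  have sub: "UNIV - S \<subseteq> {1..2*genus S}"
  proof
    fix n assume n: "n \<in> UNIV - S"
    have "0 \<in> S" using ns unfolding numerical_semigroup_def by auto
    then have "n \<noteq> 0" using n by (metis DiffD2)
    moreover have "n < 2*genus S" using gap_lt[OF ns, of n] n by blast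
    ultimately show "n \<in> {1..2*genus S}" by simp
  qed
  have e: "Sstar S = {1..2*genus S} - (UNIV - S)" unfolding Sstar_def by auto
  show ?thesis unfolding inflection_def e using sum.subset_diff[OF sub finite_atLeastAtMost, of "\<lambda>s. s"] by simp
qed



lemma u1_props:
  assumes ns: "numerical_semigroup S"
  shows "u1 S \<in> S \<and> u1 S mod 3 \<noteq> 0"
proof -
  define w where "w = (if (2*genus S+1) mod 3 \<noteq> 0 then 2*genus S+1 else 2*genus S+2)"
  have "w \<in> S"
  proof (rule ccontr)
    assume "w \<notin> S"
    from gap_lt[OF ns this] show False unfolding w_def by (auto split: if_splits)
  qed
  moreover have "w mod 3 \<noteq> 0" unfolding w_def by presburger
  ultimately show ?thesis unfolding u1_def by (metis (mono_tags, lifting) LeastI)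
qed

lemma minj:
  fixes a :: nat
  assumes "a \<in> S" "a mod 3 = j"
  defines "m \<equiv> LEAST n. n \<in> S \<and> n mod 3 = j"
  shows "m \<in> S" "m mod 3 = j" "\<And>n. n \<in> S \<Longrightarrow> n mod 3 = j \<Longrightarrow> m \<le> n"
proof -
  have "m \<in> S \<and> m mod 3 = j" unfolding m_def using assms by (metis (mono_tags, lifting) LeastI)
  then show "m \<in> S" "m mod 3 = j" by auto
  show "\<And>n. n \<in> S \<Longrightarrow> n mod 3 = j \<Longrightarrow> m \<le> n" unfolding m_def by (simp add: Least_le)
qed

theorem lemma2p5:
  fixes \<gamma> :: nat
  shows "\<exists>G. \<forall>g\<ge>G. \<forall>S0 u u' S T.
     (\<exists>R\<in>HH g \<gamma>. Spart R 0 = S0) \<longrightarrow>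
     S \<in> Hu g \<gamma> S0 u \<longrightarrow>
     (\<forall>R\<in>Hu g \<gamma> S0 u. card (Spart R (u mod 3)) \<le> card (Spart S (u mod 3))) \<longrightarrow>
     T \<in> Hu g \<gamma> S0 u' \<longrightarrow>
     (\<forall>R\<in>Hu g \<gamma> S0 u'. card (Spart R (u' mod 3)) \<le> card (Spart T (u' mod 3))) \<longrightarrow>
     int u - int (u1H g \<gamma>) < 6 * int \<gamma> \<longrightarrow>
     Spart S (u mod 3) \<subset> Spart T (u' mod 3) \<longrightarrow>
     inflection T < inflection S"
proof -
  define B where "B = 4*\<gamma>^2"
  define c where "c = 12*\<gamma>^2"
  have cB: "c = 3*B" unfolding B_def c_def by simp
  show ?thesis
  proof (rule exI[of _ "18*B^2 + 18*B + 10*\<gamma> + 20"], intro allI impI)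
    fix g S0 u u' S T
    assume gG: "18*B^2 + 18*B + 10*\<gamma> + 20 \<le> g"
      and hS: "S \<in> Hu g \<gamma> S0 u" and hT: "T \<in> Hu g \<gamma> S0 u'"
      and chi: "int u - int (u1H g \<gamma>) < 6 * int \<gamma>"
      and sub: "Spart S (u mod 3) \<subset> Spart T (u' mod 3)"
    have hS3: "hyperelliptic3 \<gamma> S" and gS: "genus S = g" and S0S: "Spart S 0 = S0" and uS: "u1 S = u"
      using hS unfolding Hu_def HS0_def HH_def by auto
    have hT3: "hyperelliptic3 \<gamma> T" and gT: "genus T = g" and S0T: "Spart T 0 = S0" and uT: "u1 T = u'"
      using hT unfolding Hu_def HS0_def HH_def by auto
    have nsS: "numerical_semigroup S" using hS3 unfolding hyperelliptic3_def by auto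
    have nsT: "numerical_semigroup T" using hT3 unfolding hyperelliptic3_def by auto
    have gapS: "n < 2*g" if "n \<notin> S" for n using gap_lt[OF nsS that] gS by simp
    have gapT: "n < 2*g" if "n \<notin> T" for n using gap_lt[OF nsT that] gT by simp
    have zS: "0 \<in> S" using nsS unfolding numerical_semigroup_def by auto
    have zT: "0 \<in> T" using nsT unfolding numerical_semigroup_def by auto
    have finS: "finite (UNIV - S)" using nsS unfolding numerical_semigroup_def by auto
    have finT: "finite (UNIV - T)" using nsT unfolding numerical_semigroup_def by auto
    have cardS: "card (UNIV - S) = g" using gS unfolding genus_def .
    have cardT: "card (UNIV - T) = g" using gT unfolding genus_def .
    have SpS: "Spart S r = {s. s \<in> S \<and> 1 \<le> s \<and> s \<le> 2*g \<and> s mod 3 = r}" for r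
      unfolding Spart_def Sstar_def gS by auto
    have SpT: "Spart T r = {s. s \<in> T \<and> 1 \<le> s \<and> s \<le> 2*g \<and> s mod 3 = r}" for r
      unfolding Spart_def Sstar_def gT by auto
    have "u1H g \<gamma> + \<gamma> \<le> g + 3" by (rule construction) (use gG in linarith)
    then have ub: "u \<le> g + 5*\<gamma> + 2" using chi by linarith
    have uprops: "u \<in> S" "u mod 3 \<noteq> 0" using u1_props[OF nsS] uS by auto
    have u'props: "u' \<in> T" "u' mod 3 \<noteq> 0" using u1_props[OF nsT] uT by auto
    define i where "i = u mod 3"
    have i12: "i = 1 \<or> i = 2" unfolding i_def using uprops by linarith
    have "u \<in> Spart S i" unfolding SpS i_def using uprops ub gG by auto
    then have "u \<in> Spart T (u' mod 3)" using sub i_def by auto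
    then have ii: "u' mod 3 = i" unfolding SpT i_def by auto
    define j where "j = 3 - i"
    have j12: "j = 1 \<or> j = 2" "j \<noteq> i" "j < 3" unfolding j_def using i12 by auto
    have u2: "(2*u) mod 3 = j" unfolding j_def using i_def i12 by presburger
    have u2': "(2*u') mod 3 = j" unfolding j_def using ii i12 by presburger
    have u2S: "2*u \<in> S" using ns_mult[OF nsS uprops(1)] .
    have u2T: "2*u' \<in> T" using ns_mult[OF nsT u'props(1)] .
    define m where "m = (LEAST n. n \<in> S \<and> n mod 3 = j)"
    define mT where "mT = (LEAST n. n \<in> T \<and> n mod 3 = j)"
    have mS: "m \<in> S" "m mod 3 = j" "\<And>n. n \<in> S \<Longrightarrow> n mod 3 = j \<Longrightarrow> m \<le> n"
      using minj[OF u2S u2] unfolding m_def by auto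
    have mTT: "mT \<in> T" "mT mod 3 = j" "\<And>n. n \<in> T \<Longrightarrow> n mod 3 = j \<Longrightarrow> mT \<le> n"
      using minj[OF u2T u2'] unfolding mT_def by auto
    define GS where "GS = UNIV - S"
    define GT where "GT = UNIV - T"
    define C where "C r = {n::nat. n mod 3 = r}" for r
    have eq0: "GS \<inter> C 0 = GT \<inter> C 0"
    proof -
      have "n \<in> S \<longleftrightarrow> n \<in> T" if "n mod 3 = 0" for n
      proof (cases "n = 0 \<or> 2*g \<le> n")
        case True then show ?thesis using zS zT gapS gapT by force
      next
        case False
        then have "n \<in> S \<longleftrightarrow> n \<in> Spart S 0" "n \<in> T \<longleftrightarrow> n \<in> Spart T 0" unfolding SpS SpT using that by auto
        then show ?thesis using S0S S0T by simp
      qed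
      then show ?thesis unfolding GS_def GT_def C_def by auto
    qed
    have subI: "GT \<inter> C i \<subseteq> GS \<inter> C i"
    proof
      fix n assume n: "n \<in> GT \<inter> C i"
      have "n \<notin> S"
      proof
        assume "n \<in> S"
        moreover have "n \<noteq> 0" using n zT unfolding GT_def by (metis Diff_iff IntD1)
        moreover have "n < 2*g" using n gapT unfolding GT_def by auto
        ultimately have "n \<in> Spart S (u mod 3)" unfolding SpS using n i_def unfolding C_def by auto
        then have "n \<in> T" using sub unfolding SpT by auto
        then show False using n unfolding GT_def by auto
      qed
      then show "n \<in> GS \<inter> C i" using n unfolding GS_def by auto
    qed
    define D where "D = GS \<inter> C i - GT \<inter> C i"
    obtain t where t: "t \<in> Spart T (u' mod 3)" "t \<notin> Spart S (u mod 3)" using sub by auto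
    have "t \<in> D"
    proof -
      have tt: "t \<in> T" "1 \<le> t" "t \<le> 2*g" "t mod 3 = i" using t(1) ii unfolding SpT by auto
      then have "t \<notin> S" using t(2) i_def unfolding SpS by auto
      then show ?thesis unfolding D_def GS_def GT_def C_def using tt by auto
    qed
    define k where "k = card D"
    have finD: "finite D" unfolding D_def GS_def using finS by auto
    have k1: "1 \<le> k" unfolding k_def using \<open>t \<in> D\<close> finD by (metis One_nat_def Suc_leI card_gt_0_iff empty_iff)
    define Q where "Q = GS \<inter> C j"
    define P where "P = GT \<inter> C j"
    have finQ: "finite Q" and finP: "finite P" unfolding Q_def P_def GS_def GT_def using finS finT by auto
    have sS: "(\<Sum>s\<in>GS. s) = (\<Sum>s\<in>GS \<inter> C 0. s) + (\<Sum>s\<in>GS \<inter> C i. s) + (\<Sum>s\<in>Q. s)"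
      unfolding Q_def C_def j_def GS_def by (rule split3[OF finS i12])
    have sT: "(\<Sum>s\<in>GT. s) = (\<Sum>s\<in>GT \<inter> C 0. s) + (\<Sum>s\<in>GT \<inter> C i. s) + (\<Sum>s\<in>P. s)"
      unfolding P_def C_def j_def GT_def by (rule split3[OF finT i12])
    have cS: "g = card (GS \<inter> C 0) + card (GS \<inter> C i) + card Q"
      using split3[OF finS i12, of "\<lambda>_. 1::nat"] cardS unfolding Q_def C_def j_def GS_def by simp
    have cT: "g = card (GT \<inter> C 0) + card (GT \<inter> C i) + card P"
      using split3[OF finT i12, of "\<lambda>_. 1::nat"] cardT unfolding P_def C_def j_def GT_def by simp
    have finGSi: "finite (GS \<inter> C i)" unfolding GS_def using finS by auto
    have sI: "(\<Sum>s\<in>GS \<inter> C i. s) = (\<Sum>s\<in>D. s) + (\<Sum>s\<in>GT \<inter> C i. s)"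
      unfolding D_def by (rule sum.subset_diff[OF subI finGSi])
    have cI: "card (GS \<inter> C i) = k + card (GT \<inter> C i)"
      unfolding k_def D_def using card_Diff_subset[OF finite_subset[OF subI finGSi] subI] card_mono[OF finGSi subI] by simp
    have cPQ: "card P = card Q + k"
    proof -
      have "card (GS \<inter> C 0) = card (GT \<inter> C 0)" using eq0 by simp
      then show ?thesis using cS cT cI by linarith
    qed
    have Qb: "n < m + c" if "n \<in> Q" for n
    proof (rule ccontr)
      assume "\<not> n < m + c"
      then have "n \<in> S" using shift[OF hS3 mS(1), of n] that mS(2) unfolding Q_def C_def c_def by auto
      then show False using that unfolding Q_def GS_def by auto
    qed
    have Pb: "n < mT + c" if "n \<in> P" for n
    proof (rule ccontr)
      assume "\<not> n < mT + c"
      then have "n \<in> T" using shift[OF hT3 mTT(1), of n] that mTT(2) unfolding P_def C_def c_def by auto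
      then show False using that unfolding P_def GT_def by auto
    qed
    have Db: "n < u + c" if "n \<in> D" for n
    proof (rule ccontr)
      assume "\<not> n < u + c"
      then have "n \<in> S" using shift[OF hS3 uprops(1), of n] that unfolding D_def C_def c_def i_def by auto
      then show False using that unfolding D_def GS_def by auto
    qed
    have Qlow: "m div 3 \<le> card Q"
    proof -
      have "{n. n < m \<and> n mod 3 = j} \<subseteq> Q"
        unfolding Q_def GS_def C_def using mS(3) by force
      then have "card {n. n < m \<and> n mod 3 = j} \<le> card Q" by (rule card_mono[OF finQ])
      then show ?thesis using count_ge[OF j12(3) mS(2)] by linarith
    qed
    have Pup: "card P \<le> (mT + c) div 3 + 1"
    proof -
      have "P \<subseteq> {n. n < mT + c \<and> n mod 3 = j}" using Pb unfolding P_def C_def by auto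
      then have "card P \<le> card {n. n < mT + c \<and> n mod 3 = j}" by (rule card_mono[rotated]) simp
      then show ?thesis using count_le[of "mT + c" j] by linarith
    qed
    have mmT: "m \<le> mT + c + 2"
    proof -
      have "m div 3 \<le> (mT + c) div 3" using Qlow Pup cPQ k1 by linarith
      moreover have "m \<le> 3*(m div 3) + 2" by linarith
      moreover have "3*((mT + c) div 3) \<le> mT + c" by linarith
      ultimately show ?thesis by linarith
    qed
    define r where "r = card (Q - P)"
    have QPsub: "Q - P \<subseteq> {mT..<m+c}"
    proof
      fix n assume n: "n \<in> Q - P"
      then have "n \<in> T" "n mod 3 = j" unfolding Q_def P_def GT_def C_def by auto
      then have "mT \<le> n" by (rule mTT(3))
      then show "n \<in> {mT..<m+c}" using Qb n by auto
    qed
    have rb: "r \<le> 2*c + 2"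
    proof -
      have "r \<le> card {mT..<m+c}" unfolding r_def by (rule card_mono[OF _ QPsub]) simp
      then show ?thesis using mmT by simp
    qed
    have PQlow: "m \<le> n" if "n \<in> P - Q" for n
    proof -
      have "n \<in> S" "n mod 3 = j" using that unfolding Q_def P_def GS_def C_def by auto
      then show ?thesis by (rule mS(3))
    qed
    have cPQ2: "card (P - Q) = r + k"
    proof -
      have "card P = card (P \<inter> Q) + card (P - Q)" by (rule card_Int_Diff[OF finP])
      moreover have "card Q = card (P \<inter> Q) + card (Q - P)" using card_Int_Diff[OF finQ, of P] by (simp add: Int_commute)
      ultimately show ?thesis using cPQ unfolding r_def by linarith
    qed
    have sP: "(\<Sum>s\<in>P. s) = (\<Sum>s\<in>P \<inter> Q. s) + (\<Sum>s\<in>P - Q. s)" by (rule sum.Int_Diff[OF finP])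
    have sQ: "(\<Sum>s\<in>Q. s) = (\<Sum>s\<in>P \<inter> Q. s) + (\<Sum>s\<in>Q - P. s)" using sum.Int_Diff[OF finQ, of "\<lambda>s. s" P] by (simp add: Int_commute)
    have PQeq: "P \<inter> Q = Q \<inter> P" by auto
    have bD: "(\<Sum>s\<in>D. s) \<le> k * (u + c)"
      unfolding k_def using sum_bounded_above[of D "\<lambda>s. s" "u + c"] Db by fastforce
    have bQP: "(\<Sum>s\<in>Q - P. s) \<le> r * (m + c)"
      unfolding r_def using sum_bounded_above[of "Q - P" "\<lambda>s. s" "m + c"] Qb by fastforce
    have bPQ: "(r + k) * m \<le> (\<Sum>s\<in>P - Q. s)"
      using sum_bounded_below[of "P - Q" m "\<lambda>s. s"] PQlow cPQ2 by fastforce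
    have c0: "card (GS \<inter> C 0) \<le> B + 1"
    proof -
      have "GS \<inter> C 0 \<subseteq> {n. n < 3*B \<and> n mod 3 = 0}"
      proof
        fix n assume n: "n \<in> GS \<inter> C 0"
        have "n < 3*B"
        proof (rule ccontr)
          assume "\<not> n < 3*B"
          then have "4*\<gamma>^2 \<le> n div 3" unfolding B_def by linarith
          from h3_mult3[OF hS3 this] have "3*(n div 3) \<in> S" .
          moreover have "3*(n div 3) = n" using n unfolding C_def by auto
          ultimately show False using n unfolding GS_def by auto
        qed
        then show "n \<in> {n. n < 3*B \<and> n mod 3 = 0}" using n unfolding C_def by auto
      qed
      then have "card (GS \<inter> C 0) \<le> card {n. n < 3*B \<and> n mod 3 = 0}" by (rule card_mono[rotated]) simp
      then show ?thesis using count_le[of "3*B" 0] by simp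
    qed
    have ci: "card (GS \<inter> C i) \<le> (u + c) div 3 + 1"
    proof -
      have "GS \<inter> C i \<subseteq> {n. n < u + c \<and> n mod 3 = i}"
      proof
        fix n assume n: "n \<in> GS \<inter> C i"
        have "n < u + c"
        proof (rule ccontr)
          assume "\<not> n < u + c"
          then have "n \<in> S" using shift[OF hS3 uprops(1), of n] n unfolding C_def c_def i_def by auto
          then show False using n unfolding GS_def by auto
        qed
        then show "n \<in> {n. n < u + c \<and> n mod 3 = i}" using n unfolding C_def by auto
      qed
      then have "card (GS \<inter> C i) \<le> card {n. n < u + c \<and> n mod 3 = i}" by (rule card_mono[rotated]) simp
      then show ?thesis using count_le[of "u + c" i] by simp
    qed
    have cq: "card Q \<le> (m + c) div 3 + 1"
    proof -
      have "Q \<subseteq> {n. n < m + c \<and> n mod 3 = j}" using Qb unfolding Q_def C_def by auto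
      then have "card Q \<le> card {n. n < m + c \<and> n mod 3 = j}" by (rule card_mono[rotated]) simp
      then show ?thesis using count_le[of "m + c" j] by simp
    qed
    have mlow: "3*g \<le> 3*B + u + m + 2*c + 9"
    proof -
      have "3*((u + c) div 3) \<le> u + c" "3*((m + c) div 3) \<le> m + c" by linarith+
      then show ?thesis using cS c0 ci cq by linarith
    qed
    have sq: "(2*c+2)*c = 18*B^2 + 6*B" unfolding cB by (simp add: algebra_simps power2_eq_square)
    have key: "u + c + (2*c+2)*c < m" using mlow ub gG sq cB by linarith
    have kin: "k*(u+c) + r*c < k*m"
    proof -
      have "r*c \<le> (2*c+2)*c" using rb by (rule mult_right_mono) simp
      moreover have "(2*c+2)*c \<le> k*((2*c+2)*c)" using k1 by simp
      moreover have "k*(u + c + (2*c+2)*c + 1) \<le> k*m" using key by (intro mult_left_mono) auto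
      moreover have "k*(u + c + (2*c+2)*c + 1) = k*(u+c) + k*((2*c+2)*c) + k" by (simp add: algebra_simps)
      ultimately show ?thesis using k1 by linarith
    qed
    have "(\<Sum>s\<in>D. s) + (\<Sum>s\<in>Q - P. s) < (\<Sum>s\<in>P - Q. s)"
    proof -
      have "(r + k) * m = r*m + k*m" by (simp add: algebra_simps)
      moreover have "r*(m+c) = r*m + r*c" by (simp add: algebra_simps)
      ultimately show ?thesis using bD bQP bPQ kin by linarith
    qed
    moreover have "(\<Sum>s\<in>GS \<inter> C 0. s) = (\<Sum>s\<in>GT \<inter> C 0. s)" using eq0 by simp
    ultimately have lt: "(\<Sum>s\<in>GS. s) < (\<Sum>s\<in>GT. s)" using sS sT sI sP sQ by linarith
    have "inflection S + (\<Sum>s\<in>GS. s) = inflection T + (\<Sum>s\<in>GT. s)"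
      using infl_gaps[OF nsS] infl_gaps[OF nsT] gS gT unfolding GS_def GT_def by simp
    then show "inflection T < inflection S" using lt by linarith
  qed
qed


end
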